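(* Let $n$ be even, let $0<\alpha\le 1/4$ with $m=\alpha n$ a positive integer, and let $0\le\epsilon<1/2$. Consider any randomized one-pass streaming algorithm (equivalently, any one-way protocol with public randomness) of the following form: after reading $x\in\{0,1\}^n$ it retains a memory state (message) of at most $c$ bits, and then, given this state and a matching $M$ on $[n]$ of exactly $m$ pairwise disjoint edges, it outputs an edge $\{i,j\}\in M$ together with a bit $b$. Suppose that for every $x\in\{0,1\}^n$ and every such matching $M$, the probability that $b\ne x_i\oplus x_j$ is at most $\epsilon$. Then $$c\;\ge\;\frac{1}{e\ln 2}\Big(\frac12-\epsilon\Big)\sqrt{\frac{n-1}{2\alpha}},$$ where $e$ is Euler's number; in particular $c=\Omega(\sqrt{n/\alpha})$.
   Context: $[n]=\{1,\dots,n\}$. A matching on $[n]$ is a set of unordered pairs of distinct elements of $[n]$, no two sharing an element. The randomness of the algorithm may be shared between the phase that reads $x$ and the phase that reads $M$; the error probability is over this randomness only, for each fixed input $(x,M)$. *)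

theory Defs
  imports "HOL-Probability.Probability"
begin

definition bitstrings :: "nat \<Rightarrow> (nat \<Rightarrow> bool) set" where
  "bitstrings n = {x. \<forall>i. i \<notin> {1..n} \<longrightarrow> \<not> x i}"

definition edges_on :: "nat \<Rightarrow> nat set set" where
  "edges_on n = {e. \<exists>i j. i \<in> {1..n} \<and> j \<in> {1..n} \<and> i \<noteq> j \<and> e = {i, j}}"

definition matchings :: "nat \<Rightarrow> nat \<Rightarrow> nat set set set" where
  "matchings n m = {M. M \<subseteq> edges_on n \<and> pairwise disjnt M \<and> finite M \<and> card M = m}"

end

theory Submission
  imports Defs
begin

definition cube :: "nat set \<Rightarrow> (nat \<Rightarrow> bool) set" where
  "cube I = {x. \<forall>i. i \<notin> I \<longrightarrow> \<not> x i}"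

definition sgnb :: "bool \<Rightarrow> real" where "sgnb b = (if b then -1 else 1)"

definition chi :: "nat set \<Rightarrow> (nat \<Rightarrow> bool) \<Rightarrow> real" where
  "chi S x = (\<Prod>i\<in>S. sgnb (x i))"

lemma cube_empty: "cube {} = {\<lambda>_. False}"
  by (auto simp: cube_def)

lemma cube_insert:
  assumes "i \<notin> I"
  shows "cube (insert i I) = cube I \<union> (\<lambda>x. x(i:=True)) ` cube I"
proof
  show "cube (insert i I) \<subseteq> cube I \<union> (\<lambda>x. x(i:=True)) ` cube I"
  proof
    fix y assume y: "y \<in> cube (insert i I)"
    show "y \<in> cube I \<union> (\<lambda>x. x(i:=True)) ` cube I"
    proof (cases "y i")
      case True
      have "y(i:=False) \<in> cube I" using y by (auto simp: cube_def)
      moreover have "y = (y(i:=False))(i:=True)" using True by (auto simp: fun_eq_iff)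
      ultimately show ?thesis by blast
    next
      case False
      then have "y \<in> cube I" using y by (auto simp: cube_def)
      then show ?thesis by blast
    qed
  qed
  show "cube I \<union> (\<lambda>x. x(i:=True)) ` cube I \<subseteq> cube (insert i I)"
    by (auto simp: cube_def)
qed

lemma finite_cube: "finite I \<Longrightarrow> finite (cube I)"
proof (induction I rule: finite_induct)
  case empty then show ?case by (simp add: cube_empty)
next
  case (insert i I) then show ?case by (simp add: cube_insert)
qed

lemma sum_cube_insert:
  assumes "finite I" "i \<notin> I"
  shows "(\<Sum>y\<in>cube (insert i I). h y) = (\<Sum>x\<in>cube I. h x + h (x(i:=True)))"
proof -
  have disj: "cube I \<inter> (\<lambda>x. x(i:=True)) ` cube I = {}"
    using assms by (auto simp: cube_def)
  have inj: "inj_on (\<lambda>x. x(i:=True)) (cube I)"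
  proof
    fix x y assume "x \<in> cube I" "y \<in> cube I" "x(i:=True) = y(i:=True)"
    note h = this
    show "x = y"
    proof
      fix j
      show "x j = y j"
      proof (cases "j = i")
        case True
        then show ?thesis using h assms(2) unfolding cube_def by blast
      next
        case False
        have "(x(i:=True)) j = (y(i:=True)) j" using h(3) by simp
        then show ?thesis using False by simp
      qed
    qed
  qed
  have "(\<Sum>y\<in>cube (insert i I). h y) = (\<Sum>y\<in>cube I. h y) + (\<Sum>y\<in>(\<lambda>x. x(i:=True)) ` cube I. h y)"
    unfolding cube_insert[OF assms(2)]
    by (rule sum.union_disjoint) (use assms disj in \<open>auto simp: finite_cube\<close>)
  also have "(\<Sum>y\<in>(\<lambda>x. x(i:=True)) ` cube I. h y) = (\<Sum>x\<in>cube I. h (x(i:=True)))"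
    by (rule sum.reindex[OF inj, unfolded comp_def])
  finally show ?thesis by (simp add: sum.distrib)
qed

lemma card_cube: "finite I \<Longrightarrow> card (cube I) = 2 ^ card I"
proof (induction I rule: finite_induct)
  case empty then show ?case by (simp add: cube_empty)
next
  case (insert i I)
  have "card (cube (insert i I)) = (\<Sum>y\<in>cube (insert i I). 1::nat)" by simp
  also have "\<dots> = (\<Sum>x\<in>cube I. 2::nat)" using sum_cube_insert[OF insert(1,2), of "\<lambda>_. 1::nat"] by simp
  also have "\<dots> = 2 * 2 ^ card I" using insert by simp
  finally show ?case using insert by simp
qed

lemma chi_insert: "finite S \<Longrightarrow> i \<notin> S \<Longrightarrow> chi (insert i S) x = sgnb (x i) * chi S x"
  by (simp add: chi_def)

lemma chi_upd: "i \<notin> S \<Longrightarrow> chi S (x(i:=v)) = chi S x"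
  unfolding chi_def by (rule prod.cong) auto

lemma choose_rec1: "(n choose Suc r) * Suc r = (n choose r) * (n - r)"
proof (cases n)
  case 0 then show ?thesis by simp
next
  case (Suc n')
  have "(n - r) * (n choose r) = n * ((n - 1) choose r)" by (rule binomial_absorb_comp)
  also have "\<dots> = (n choose Suc r) * Suc r" using Suc_times_binomial_eq[of n' r] Suc by simp
  finally show ?thesis by (simp add: mult.commute)
qed

lemma choose_ineq:
  assumes "j \<le> k"
  shows "real (2*k choose 2*j) \<le> real (k choose j) * (2 * real k - 1) ^ j"
  using assms
proof (induction j)
  case 0 then show ?case by simp
next
  case (Suc j)
  have jk: "j < k" using Suc by simp
  have IH: "real (2*k choose 2*j) \<le> real (k choose j) * (2 * real k - 1) ^ j" using Suc by simp
  have r1: "real (2*k choose Suc (2*j)) * real (Suc (2*j)) = real (2*k choose 2*j) * (2*real k - 2*real j)"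
    using choose_rec1[of "2*k" "2*j"] jk
    by (metis of_nat_diff of_nat_mult of_nat_numeral mult_le_mono2 less_imp_le_nat right_diff_distrib' of_nat_mult)
  have r2: "real (2*k choose Suc (Suc (2*j))) * real (Suc (Suc (2*j))) = real (2*k choose Suc (2*j)) * (2*real k - 2*real j - 1)"
  proof -
    have "(2*k choose Suc (Suc (2*j))) * Suc (Suc (2*j)) = (2*k choose Suc (2*j)) * (2*k - Suc (2*j))"
      by (rule choose_rec1)
    then have "real ((2*k choose Suc (Suc (2*j))) * Suc (Suc (2*j))) = real ((2*k choose Suc (2*j)) * (2*k - Suc (2*j)))"
      by simp
    moreover have "real (2*k - Suc (2*j)) = 2*real k - 2*real j - 1" using jk by (simp add: of_nat_diff)
    ultimately show ?thesis by (simp only: of_nat_mult)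
  qed
  have r3: "real (k choose Suc j) * real (Suc j) = real (k choose j) * (real k - real j)"
  proof -
    have "real ((k choose Suc j) * Suc j) = real ((k choose j) * (k - j))" using choose_rec1[of k j] by simp
    then show ?thesis using jk by (simp add: of_nat_diff algebra_simps)
  qed
  define X where "X = real (2*k choose 2*j)"
  define Y where "Y = real (k choose j)"
  define K where "K = 2 * real k - 1"
  have K1: "K \<ge> 1" using jk unfolding K_def by simp
  have kj: "real k - real j \<ge> 1" using jk by simp
  have "real (2*k choose 2*Suc j) * ((2*real j + 1) * (2*real j + 2)) = (real (2*k choose Suc (Suc (2*j))) * real (Suc (Suc (2*j)))) * (2*real j + 1)"
    by (simp add: algebra_simps)
  also have "\<dots> = (real (2*k choose Suc (2*j)) * real (Suc (2*j))) * (2*real k - 2*real j - 1)"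
    unfolding r2 by (simp add: algebra_simps)
  also have "\<dots> = X * (2*real k - 2*real j) * (2*real k - 2*real j - 1)"
    unfolding r1 X_def by simp
  also have "\<dots> \<le> Y * K^j * (2*real k - 2*real j) * (2*real k - 2*real j - 1)"
    using IH kj unfolding X_def Y_def K_def by (intro mult_right_mono) auto
  also have "\<dots> = (Y * (real k - real j)) * K^j * 2 * (2*real k - 2*real j - 1)" by (simp add: algebra_simps)
  also have "\<dots> = (real (k choose Suc j) * (real j + 1)) * K^j * 2 * (2*real k - 2*real j - 1)"
  proof -
    have r3': "Y * (real k - real j) = real (k choose Suc j) * (real j + 1)"
      using r3 unfolding Y_def by (simp add: algebra_simps)
    show ?thesis by (simp only: r3')
  qed
  also have "\<dots> \<le> (real (k choose Suc j) * (real j + 1)) * K^j * 2 * ((2*real j + 1) * K)"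
  proof -
    have "2*real k - 2*real j - 1 \<le> (2*real j + 1) * K"
      using K1 unfolding K_def by (simp add: algebra_simps)
    then show ?thesis using K1 by (intro mult_left_mono) auto
  qed
  also have "\<dots> = (real (k choose Suc j) * K^Suc j) * ((2*real j + 1) * (2*real j + 2))"
    by (simp add: algebra_simps)
  finally have "real (2*k choose 2*Suc j) * ((2*real j + 1) * (2*real j + 2)) \<le> (real (k choose Suc j) * K^Suc j) * ((2*real j + 1) * (2*real j + 2))" .
  moreover have "(2*real j + 1) * (2*real j + 2) > 0" by simp
  ultimately have "real (2*k choose 2*Suc j) \<le> real (k choose Suc j) * K^Suc j"
    by (rule mult_right_le_imp_le)
  then show ?case unfolding K_def .
qed

lemma sum_even_odd:
  fixes h :: "nat \<Rightarrow> real"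
  shows "(\<Sum>i\<le>2*k. h i) = (\<Sum>j\<le>k. h (2*j)) + (\<Sum>j<k. h (2*j+1))"
proof (induction k)
  case 0 then show ?case by simp
next
  case (Suc k)
  have "(\<Sum>i\<le>2*Suc k. h i) = (\<Sum>i\<le>2*k. h i) + h (2*k+1) + h (2*k+2)"
    by (simp add: atMost_Suc)
  then show ?case using Suc by (simp add: atMost_Suc lessThan_Suc)
qed

lemma two_point:
  fixes a y :: real
  shows "(a + y) ^ (2*k) + (a - y) ^ (2*k) \<le> 2 * (a^2 + (2 * real k - 1) * y^2) ^ k"
proof -
  define K where "K = 2 * real k - 1"
  define h where "h i = real (2*k choose i) * (y^i + (-y)^i) * a^(2*k-i)" for i
  have e: "a + y = y + a" "a - y = (-y) + a" by simp_all
  have "(a + y) ^ (2*k) + (a - y) ^ (2*k) = (y + a) ^ (2*k) + ((-y) + a) ^ (2*k)" by (simp only: e)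
  also have "\<dots> = (\<Sum>i\<le>2*k. h i)"
    unfolding binomial_ring h_def by (simp add: sum.distrib[symmetric] algebra_simps)
  also have "\<dots> = (\<Sum>j\<le>k. h (2*j)) + (\<Sum>j<k. h (2*j+1))" by (rule sum_even_odd)
  also have "(\<Sum>j<k. h (2*j+1)) = 0" unfolding h_def by simp
  also have "(\<Sum>j\<le>k. h (2*j)) \<le> (\<Sum>j\<le>k. 2 * (real (k choose j) * (K * y^2)^j * (a^2)^(k-j)))"
  proof (rule sum_mono)
    fix j assume "j \<in> {..k}"
    then have jk: "j \<le> k" by simp
    have P: "0 \<le> (y^2)^j * (a^2)^(k-j)" by simp
    have e1: "y^(2*j) = (y^2)^j" by (simp add: power_mult)
    have e2: "a^(2*k - 2*j) = (a^2)^(k-j)" by (simp add: power_mult[symmetric] diff_mult_distrib2)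
    have "h (2*j) = 2 * (real (2*k choose 2*j) * ((y^2)^j * (a^2)^(k-j)))"
      unfolding h_def using e1 e2 by (simp add: power_mult)
    also have "\<dots> \<le> 2 * ((real (k choose j) * K^j) * ((y^2)^j * (a^2)^(k-j)))"
      using choose_ineq[OF jk] P unfolding K_def by (intro mult_left_mono mult_right_mono) auto
    also have "\<dots> = 2 * (real (k choose j) * (K * y^2)^j * (a^2)^(k-j))"
      by (simp add: power_mult_distrib)
    finally show "h (2*j) \<le> 2 * (real (k choose j) * (K * y^2)^j * (a^2)^(k-j))" .
  qed
  also have "\<dots> = 2 * (K * y^2 + a^2)^k"
    unfolding binomial_ring by (simp add: sum_distrib_left)
  finally show ?thesis unfolding K_def by (simp add: add.commute)
qed

lemma convex_pow_pt:
  fixes u v A B :: real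
  assumes "u \<ge> 0" "v \<ge> 0" "A > 0" "B > 0"
  shows "(u + v) ^ Suc k \<le> (A + B) ^ k * (u ^ Suc k / A ^ k + v ^ Suc k / B ^ k)"
proof -
  have cv: "convex_on {0..} (\<lambda>x::real. x ^ Suc k)"
  proof (cases "even (Suc k)")
    case True
    then show ?thesis using convex_power_even convex_on_subset by blast
  next
    case False
    then show ?thesis using convex_power_odd by blast
  qed
  define th where "th = A / (A + B)"
  have th0: "0 < th" "th < 1" using assms unfolding th_def by auto
  define t where "t = 1 - th"
  define x where "x = u / th"
  define y where "y = v / (1 - th)"
  have t0: "0 \<le> t" "t \<le> 1" using th0 unfolding t_def by auto
  have x0: "x \<in> {0..}" "y \<in> {0..}" using assms th0 unfolding x_def y_def by auto
  have comb: "(1 - t) * x + t * y = u + v"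
    unfolding t_def x_def y_def using th0 by simp
  have "(u + v) ^ Suc k = ((1 - t) *\<^sub>R x + t *\<^sub>R y) ^ Suc k" using comb by simp
  also have "\<dots> \<le> (1 - t) * x ^ Suc k + t * y ^ Suc k"
    using convex_onD[OF cv t0 x0] by simp
  also have "(1 - t) * x ^ Suc k = u ^ Suc k / th ^ k"
    unfolding t_def x_def using th0 by (simp add: power_divide field_simps)
  also have "\<dots> = (A + B) ^ k * (u ^ Suc k / A ^ k)"
    unfolding th_def using assms by (simp add: power_divide field_simps)
  also have "t * y ^ Suc k = v ^ Suc k / (1 - th) ^ k"
    unfolding t_def y_def using th0 by (simp add: power_divide field_simps)
  also have "1 - th = B / (A + B)" unfolding th_def using assms by (simp add: field_simps)
  also have "v ^ Suc k / (B / (A + B)) ^ k = (A + B) ^ k * (v ^ Suc k / B ^ k)"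
    using assms by (simp add: power_divide field_simps)
  finally show ?thesis by (simp add: distrib_left)
qed

lemma sum_pow_mink:
  fixes u v :: "'a \<Rightarrow> real"
  assumes fin: "finite X" and u0: "\<And>x. x \<in> X \<Longrightarrow> u x \<ge> 0" and v0: "\<And>x. x \<in> X \<Longrightarrow> v x \<ge> 0"
    and su: "(\<Sum>x\<in>X. u x ^ Suc k) \<le> N * A ^ Suc k"
    and sv: "(\<Sum>x\<in>X. v x ^ Suc k) \<le> N * B ^ Suc k"
    and A0: "A \<ge> 0" and B0: "B \<ge> 0"
  shows "(\<Sum>x\<in>X. (u x + v x) ^ Suc k) \<le> N * (A + B) ^ Suc k"
proof (cases "A = 0 \<or> B = 0")
  case True
  then show ?thesis
  proof
    assume A: "A = 0"
    have "(\<Sum>x\<in>X. u x ^ Suc k) \<le> 0" using su A by simp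
    moreover have "(\<Sum>x\<in>X. u x ^ Suc k) \<ge> 0" using u0 by (intro sum_nonneg) auto
    ultimately have "(\<Sum>x\<in>X. u x ^ Suc k) = 0" by linarith
    then have "\<forall>x\<in>X. u x ^ Suc k = 0" using fin u0 by (subst (asm) sum_nonneg_eq_0_iff) auto
    then have "\<forall>x\<in>X. u x = 0" by auto
    then show ?thesis using sv A by simp
  next
    assume B: "B = 0"
    have "(\<Sum>x\<in>X. v x ^ Suc k) \<le> 0" using sv B by simp
    moreover have "(\<Sum>x\<in>X. v x ^ Suc k) \<ge> 0" using v0 by (intro sum_nonneg) auto
    ultimately have "(\<Sum>x\<in>X. v x ^ Suc k) = 0" by linarith
    then have "\<forall>x\<in>X. v x ^ Suc k = 0" using fin v0 by (subst (asm) sum_nonneg_eq_0_iff) auto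
    then have "\<forall>x\<in>X. v x = 0" by auto
    then show ?thesis using su B by simp
  qed
next
  case False
  then have A: "A > 0" and B: "B > 0" using A0 B0 by auto
  have "(\<Sum>x\<in>X. (u x + v x) ^ Suc k) \<le> (\<Sum>x\<in>X. (A + B) ^ k * (u x ^ Suc k / A ^ k + v x ^ Suc k / B ^ k))"
    by (rule sum_mono) (rule convex_pow_pt[OF u0 v0 A B])
  also have "\<dots> = (A + B) ^ k * ((\<Sum>x\<in>X. u x ^ Suc k) / A ^ k + (\<Sum>x\<in>X. v x ^ Suc k) / B ^ k)"
    by (simp add: sum_distrib_left sum.distrib sum_divide_distrib distrib_left)
  also have "\<dots> \<le> (A + B) ^ k * ((N * A ^ Suc k) / A ^ k + (N * B ^ Suc k) / B ^ k)"
    using A B su sv by (intro mult_left_mono add_mono divide_right_mono) auto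
  also have "\<dots> = N * (A + B) ^ Suc k" using A B by (simp add: field_simps)
  finally show ?thesis .
qed

lemma sum_Pow_insert:
  assumes "finite I" "i \<notin> I"
  shows "(\<Sum>S\<in>Pow (insert i I). h S) = (\<Sum>S\<in>Pow I. h S) + (\<Sum>S\<in>Pow I. h (insert i S))"
proof -
  have inj: "inj_on (insert i) (Pow I)" using assms(2) unfolding inj_on_def
    by (metis PowD insert_ident subsetD)
  have "(\<Sum>S\<in>Pow (insert i I). h S) = (\<Sum>S\<in>Pow I. h S) + (\<Sum>S\<in>insert i ` Pow I. h S)"
    unfolding Pow_insert using assms by (intro sum.union_disjoint) auto
  also have "(\<Sum>S\<in>insert i ` Pow I. h S) = (\<Sum>S\<in>Pow I. h (insert i S))"
    by (rule sum.reindex[OF inj, unfolded comp_def])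
  finally show ?thesis .
qed

definition polyv :: "real \<Rightarrow> nat set \<Rightarrow> (nat set \<Rightarrow> real) \<Rightarrow> (nat \<Rightarrow> bool) \<Rightarrow> real" where
  "polyv \<rho> I c x = (\<Sum>S\<in>Pow I. \<rho> ^ card S * c S * chi S x)"

lemma hypercontractive:
  assumes "finite I" "\<rho>^2 * (2 * real (Suc k) - 1) \<le> 1"
  shows "(\<Sum>x\<in>cube I. polyv \<rho> I c x ^ (2 * Suc k)) \<le> 2 ^ card I * (\<Sum>S\<in>Pow I. (c S)^2) ^ Suc k"
  using assms(1)
proof (induction I arbitrary: c rule: finite_induct)
  case empty
  have "(c {})^(2*Suc k) = ((c {})^2)^Suc k" by (rule power_mult)
  then show ?case by (simp add: cube_empty polyv_def chi_def del: power_Suc)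
next
  case (insert i I)
  define a where "a x = polyv \<rho> I c x" for x
  define b where "b x = polyv \<rho> I (\<lambda>S. c (insert i S)) x" for x
  have fin: "finite I" "i \<notin> I" by fact+
  have poly_split: "polyv \<rho> (insert i I) c z = a z + \<rho> * sgnb (z i) * b z" for z
  proof -
    have "polyv \<rho> (insert i I) c z = a z + (\<Sum>S\<in>Pow I. \<rho> ^ card (insert i S) * c (insert i S) * chi (insert i S) z)"
      unfolding polyv_def a_def by (rule sum_Pow_insert[OF fin])
    also have "(\<Sum>S\<in>Pow I. \<rho> ^ card (insert i S) * c (insert i S) * chi (insert i S) z) = \<rho> * sgnb (z i) * b z"
      unfolding b_def polyv_def sum_distrib_left
    proof (rule sum.cong)
      fix S assume "S \<in> Pow I"
      then have S: "finite S" "i \<notin> S" using fin finite_subset by auto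
      show "\<rho> ^ card (insert i S) * c (insert i S) * chi (insert i S) z = \<rho> * sgnb (z i) * (\<rho> ^ card S * c (insert i S) * chi S z)"
        using S by (simp add: chi_insert)
    qed simp
    finally show ?thesis .
  qed
  have ab_upd: "a (x(i:=v)) = a x" "b (x(i:=v)) = b x" for x v
  proof -
    have "chi S (x(i:=v)) = chi S x" if "S \<in> Pow I" for S using that fin by (intro chi_upd) auto
    then show "a (x(i:=v)) = a x" "b (x(i:=v)) = b x" unfolding a_def b_def polyv_def
      by (auto intro!: sum.cong)
  qed
  have K: "(2 * real (Suc k) - 1) * \<rho>^2 \<le> 1" using assms(2) by (simp add: mult.commute)
  have "(\<Sum>x\<in>cube (insert i I). polyv \<rho> (insert i I) c x ^ (2 * Suc k))
      = (\<Sum>x\<in>cube I. (a x + \<rho> * b x) ^ (2 * Suc k) + (a x - \<rho> * b x) ^ (2 * Suc k))"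
    unfolding sum_cube_insert[OF fin]
  proof (rule sum.cong)
    fix x assume "x \<in> cube I"
    then have xi: "\<not> x i" using fin unfolding cube_def by auto
    have "polyv \<rho> (insert i I) c x = a x + \<rho> * b x" using poly_split[of x] xi by (simp add: sgnb_def)
    moreover have "polyv \<rho> (insert i I) c (x(i:=True)) = a x - \<rho> * b x"
      using poly_split[of "x(i:=True)"] ab_upd by (simp add: sgnb_def)
    ultimately show "polyv \<rho> (insert i I) c x ^ (2 * Suc k) + polyv \<rho> (insert i I) c (x(i := True)) ^ (2 * Suc k)
      = (a x + \<rho> * b x) ^ (2 * Suc k) + (a x - \<rho> * b x) ^ (2 * Suc k)" by simp
  qed simp
  also have "\<dots> \<le> (\<Sum>x\<in>cube I. 2 * ((a x)^2 + (b x)^2) ^ Suc k)"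
  proof (rule sum_mono)
    fix x
    have "(a x + \<rho> * b x) ^ (2 * Suc k) + (a x - \<rho> * b x) ^ (2 * Suc k)
          \<le> 2 * ((a x)^2 + (2 * real (Suc k) - 1) * (\<rho> * b x)^2) ^ Suc k"
      by (rule two_point)
    also have "\<dots> \<le> 2 * ((a x)^2 + (b x)^2) ^ Suc k"
    proof -
      have "(2 * real (Suc k) - 1) * (\<rho> * b x)^2 = ((2 * real (Suc k) - 1) * \<rho>^2) * (b x)^2"
        by (simp add: power_mult_distrib)
      also have "\<dots> \<le> (b x)^2" using K by (intro mult_left_le_one_le) auto
      finally show ?thesis by (intro mult_left_mono power_mono) auto
    qed
    finally show "(a x + \<rho> * b x) ^ (2 * Suc k) + (a x - \<rho> * b x) ^ (2 * Suc k) \<le> 2 * ((a x)^2 + (b x)^2) ^ Suc k" .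
  qed
  also have "\<dots> = 2 * (\<Sum>x\<in>cube I. ((a x)^2 + (b x)^2) ^ Suc k)" by (simp add: sum_distrib_left)
  also have "\<dots> \<le> 2 * (2 ^ card I * ((\<Sum>S\<in>Pow I. (c S)^2) + (\<Sum>S\<in>Pow I. (c (insert i S))^2)) ^ Suc k)"
  proof -
    have IHa: "(\<Sum>x\<in>cube I. ((a x)^2) ^ Suc k) \<le> 2 ^ card I * (\<Sum>S\<in>Pow I. (c S)^2) ^ Suc k"
      using insert.IH[of c] unfolding a_def power_mult .
    have IHb: "(\<Sum>x\<in>cube I. ((b x)^2) ^ Suc k) \<le> 2 ^ card I * (\<Sum>S\<in>Pow I. (c (insert i S))^2) ^ Suc k"
      using insert.IH[of "\<lambda>S. c (insert i S)"] unfolding b_def power_mult .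
    show ?thesis
      by (intro mult_left_mono sum_pow_mink[OF finite_cube[OF fin(1)] _ _ IHa IHb]) (auto intro: sum_nonneg)
  qed
  also have "\<dots> = 2 ^ card (insert i I) * (\<Sum>S\<in>Pow (insert i I). (c S)^2) ^ Suc k"
    using fin by (simp add: sum_Pow_insert)
  finally show ?case .
qed

lemma young_pow:
  fixes t y :: real
  assumes "t > 0" "y \<ge> 0"
  shows "real (Suc m) * t ^ m * y \<le> real m * t ^ Suc m + y ^ Suc m"
proof -
  have "1 + real (Suc m) * (y / t - 1) \<le> (1 + (y / t - 1)) ^ Suc m"
    by (rule Bernoulli_inequality) (use assms in simp)
  also have "\<dots> = y ^ Suc m / t ^ Suc m" using assms by (simp add: power_divide)
  finally have "(1 + real (Suc m) * (y / t - 1)) * t ^ Suc m \<le> y ^ Suc m"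
    using assms by (simp add: field_simps)
  moreover have "(1 + real (Suc m) * (y / t - 1)) * t ^ Suc m = real (Suc m) * t ^ m * y - real m * t ^ Suc m"
    using assms by (simp add: field_simps)
  ultimately show ?thesis by linarith
qed

definition Fco :: "(nat \<Rightarrow> bool) set \<Rightarrow> nat set \<Rightarrow> real" where
  "Fco A e = (\<Sum>x\<in>A. chi e x)"

lemma level2_young:
  assumes I: "finite I" and AI: "A \<subseteq> cube I" and EI: "E \<subseteq> Pow I" and E2: "\<forall>e\<in>E. card e = 2"
    and t: "t > 0"
  defines "W \<equiv> (\<Sum>e\<in>E. (Fco A e)^2)"
  shows "real (2 * Suc k) * t ^ (2*k+1) * sqrt W
           \<le> real (2*k+1) * t ^ (2 * Suc k) * real (card A) + 2 ^ card I * real (2*k+1) ^ (2 * Suc k)"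
proof (cases "W = 0")
  case True
  then show ?thesis using t by simp
next
  case False
  have finE: "finite E" using EI I by (meson finite_Pow_iff finite_subset)
  have W0: "W > 0" using False unfolding W_def by (metis order_le_less sum_nonneg zero_le_power2)
  define Q where "Q = real (2*k+1)"
  have Q1: "Q \<ge> 1" unfolding Q_def by simp
  define \<rho> where "\<rho> = 1 / sqrt Q"
  have rho2: "\<rho>^2 = 1 / Q" unfolding \<rho>_def using Q1 by (simp add: power_divide)
  define c where "c S = (if S \<in> E then Q * Fco A S / sqrt W else 0)" for S
  define g where "g x = (\<Sum>e\<in>E. Fco A e * chi e x / sqrt W)" for x
  have poly_g: "polyv \<rho> I c x = g x" for x
  proof -
    have "polyv \<rho> I c x = (\<Sum>S\<in>E. \<rho> ^ card S * c S * chi S x)"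
      unfolding polyv_def using EI I by (intro sum.mono_neutral_right) (auto simp: c_def)
    also have "\<dots> = g x" unfolding g_def
    proof (rule sum.cong)
      fix S assume S: "S \<in> E"
      then have "\<rho> ^ card S = 1 / Q" using E2 rho2 by simp
      then show "\<rho> ^ card S * c S * chi S x = Fco A S * chi S x / sqrt W"
        using S Q1 unfolding c_def by simp
    qed simp
    finally show ?thesis .
  qed
  have csum: "(\<Sum>S\<in>Pow I. (c S)^2) = Q^2"
  proof -
    have "(\<Sum>S\<in>Pow I. (c S)^2) = (\<Sum>S\<in>E. (c S)^2)"
      using EI I by (intro sum.mono_neutral_right) (auto simp: c_def)
    also have "\<dots> = (\<Sum>S\<in>E. Q^2 * (Fco A S)^2 / W)"
      using W0 by (intro sum.cong) (auto simp: c_def power_mult_distrib power_divide)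
    also have "\<dots> = Q^2 * W / W" unfolding W_def by (simp add: sum_distrib_left sum_divide_distrib)
    finally show ?thesis using W0 by simp
  qed
  have hc: "(\<Sum>x\<in>cube I. (g x) ^ (2 * Suc k)) \<le> 2 ^ card I * Q ^ (2 * Suc k)"
  proof -
    have "\<rho>^2 * (2 * real (Suc k) - 1) \<le> 1" using rho2 Q1 unfolding Q_def by simp
    from hypercontractive[OF I this, of c]
    show ?thesis unfolding poly_g csum power_mult .
  qed
  have sA: "(\<Sum>x\<in>A. g x) = sqrt W"
  proof -
    have "(\<Sum>x\<in>A. g x) = (\<Sum>e\<in>E. Fco A e * Fco A e / sqrt W)"
      unfolding g_def Fco_def by (subst sum.swap) (simp add: sum_distrib_left sum_divide_distrib)
    also have "\<dots> = W / sqrt W" unfolding W_def by (simp add: sum_divide_distrib power2_eq_square)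
    also have "\<dots> = sqrt W" using W0 by (simp add: real_div_sqrt)
    finally show ?thesis .
  qed
  have finA: "finite A" using AI finite_cube[OF I] finite_subset by blast
  have "real (2 * Suc k) * t ^ (2*k+1) * sqrt W = (\<Sum>x\<in>A. real (Suc (2*k+1)) * t ^ (2*k+1) * g x)"
    unfolding sA[symmetric] by (simp add: sum_distrib_left)
  also have "\<dots> \<le> (\<Sum>x\<in>A. real (2*k+1) * t ^ Suc (2*k+1) + (g x) ^ (2 * Suc k))"
  proof (rule sum_mono)
    fix x
    have "real (Suc (2*k+1)) * t ^ (2*k+1) * g x \<le> real (Suc (2*k+1)) * t ^ (2*k+1) * \<bar>g x\<bar>"
      using t by (intro mult_left_mono) auto
    also have "\<dots> \<le> real (2*k+1) * t ^ Suc (2*k+1) + \<bar>g x\<bar> ^ Suc (2*k+1)"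
      by (rule young_pow[OF t]) simp
    also have "\<bar>g x\<bar> ^ Suc (2*k+1) = (g x) ^ (2 * Suc k)"
      by (simp add: power_even_abs)
    finally show "real (Suc (2*k+1)) * t ^ (2*k+1) * g x \<le> real (2*k+1) * t ^ Suc (2*k+1) + (g x) ^ (2 * Suc k)" .
  qed
  also have "\<dots> = real (2*k+1) * t ^ (2 * Suc k) * real (card A) + (\<Sum>x\<in>A. (g x) ^ (2 * Suc k))"
    by (simp add: sum.distrib)
  also have "(\<Sum>x\<in>A. (g x) ^ (2 * Suc k)) \<le> (\<Sum>x\<in>cube I. (g x) ^ (2 * Suc k))"
  proof -
    have nn: "0 \<le> (g x)^(2*Suc k)" for x by (simp only: power_mult) simp
    show ?thesis using AI finite_cube[OF I] nn by (intro sum_mono2) auto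
  qed
  finally show ?thesis using hc unfolding Q_def by simp
qed

lemma exists_k:
  fixes L :: real assumes "L \<ge> 0"
  shows "\<exists>k::nat. L \<le> 2 * (real k + 1) \<and> 2 * (real k + 1) \<le> L + 2"
proof (cases "L \<le> 2")
  case True
  then show ?thesis using assms by (intro exI[of _ 0]) simp
next
  case False
  define j where "j = nat \<lceil>L/2\<rceil>"
  have j1: "j \<ge> 1" using False unfolding j_def by linarith
  have "real j = of_int \<lceil>L/2\<rceil>" unfolding j_def using False by simp
  then have "L \<le> 2 * real j" "2 * real j < L + 2" by linarith+
  then show ?thesis using j1 by (intro exI[of _ "j - 1"]) (simp add: of_nat_diff)
qed

lemma level2_entropy:
  assumes I: "finite I" and AI: "A \<subseteq> cube I" and EI: "E \<subseteq> Pow I" and E2: "\<forall>e\<in>E. card e = 2"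
    and Ane: "A \<noteq> {}"
  shows "sqrt (\<Sum>e\<in>E. (Fco A e)^2) \<le> exp 1 * real (card A) * (ln (2 ^ card I / real (card A)) + 1)"
proof -
  define W where "W = (\<Sum>e\<in>E. (Fco A e)^2)"
  define N :: real where "N = 2 ^ card I"
  define a where "a = real (card A)"
  have finA: "finite A" using AI finite_cube[OF I] finite_subset by blast
  have a0: "a > 0" using finA Ane unfolding a_def by (simp add: card_gt_0_iff)
  have aN: "a \<le> N" unfolding a_def N_def
    using card_mono[OF finite_cube[OF I] AI] card_cube[OF I] by (metis of_nat_le_iff of_nat_numeral of_nat_power)
  define L where "L = ln (N / a)"
  have L0: "L \<ge> 0" unfolding L_def using a0 aN by simp
  obtain k :: nat where k: "L \<le> 2 * (real k + 1)" "2 * (real k + 1) \<le> L + 2" using exists_k[OF L0] by blast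
  define Q where "Q = real (2*k+1)"
  define t where "t = Q * exp 1"
  have Q1: "Q \<ge> 1" unfolding Q_def by simp
  have t0: "t > 0" unfolding t_def using Q1 by simp
  define T where "T = t ^ (2*k+1)"
  have T0: "T > 0" unfolding T_def using t0 by simp
  have young: "real (2 * Suc k) * T * sqrt W \<le> Q * (T * t) * a + N * (Q ^ (2*k+1) * Q)"
    using level2_young[OF I AI EI E2 t0, of k] unfolding W_def T_def Q_def N_def a_def
    by (simp add: mult.commute mult.left_commute)
  have NaL: "N = a * exp L" unfolding L_def using a0 aN by simp
  have "exp L \<le> exp (real (2 * Suc k))" using k by simp
  also have "\<dots> = exp 1 ^ (2 * Suc k)" by (metis exp_of_nat_mult mult.right_neutral)
  also have "\<dots> = exp 1 ^ (2*k+1) * exp 1" by simp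
  finally have eL: "exp L \<le> exp 1 ^ (2*k+1) * exp 1" .
  have TQ: "T = Q ^ (2*k+1) * exp 1 ^ (2*k+1)" unfolding T_def t_def by (simp add: power_mult_distrib)
  have "N * (Q ^ (2*k+1) * Q) \<le> a * (exp 1 ^ (2*k+1) * exp 1) * (Q ^ (2*k+1) * Q)"
    unfolding NaL using eL a0 Q1 by (intro mult_right_mono mult_left_mono) auto
  also have "\<dots> = a * Q * exp 1 * T" unfolding TQ by (simp add: algebra_simps)
  finally have "real (2 * Suc k) * T * sqrt W \<le> Q * (T * t) * a + a * Q * exp 1 * T"
    using young by linarith
  also have "\<dots> = real (2 * Suc k) * T * (a * Q * exp 1)" unfolding t_def Q_def by (simp add: algebra_simps)
  finally have "sqrt W \<le> a * Q * exp 1" using T0 by (simp add: mult_le_cancel_left_pos)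
  also have "\<dots> \<le> a * (L + 1) * exp 1" using k a0 unfolding Q_def by (intro mult_right_mono mult_left_mono) auto
  finally show ?thesis unfolding W_def a_def L_def N_def by (simp add: algebra_simps)
qed

lemma level2_simple:
  assumes I: "finite I" and AI: "A \<subseteq> cube I" and EI: "E \<subseteq> Pow I" and E2: "\<forall>e\<in>E. card e = 2"
  shows "2 * sqrt (\<Sum>e\<in>E. (Fco A e)^2) \<le> real (card A) + 2 ^ card I"
  using level2_young[OF I AI EI E2, of 1 0] by simp

lemma chi_sum_zero:
  assumes I: "finite I" and eI: "e \<subseteq> I" and ne: "e \<noteq> {}"
  shows "(\<Sum>x\<in>cube I. chi e x) = 0"
proof -
  obtain i where i: "i \<in> e" using ne by blast
  define J where "J = I - {i}"
  have IJ: "I = insert i J" "i \<notin> J" "finite J" using i eI I unfolding J_def by auto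
  have fe: "finite e" using eI I finite_subset by blast
  have ce: "chi e x = sgnb (x i) * chi (e - {i}) x" for x
    using chi_insert[of "e - {i}" i x] fe i by (simp add: insert_absorb)
  have "(\<Sum>x\<in>cube I. chi e x) = (\<Sum>x\<in>cube J. chi e x + chi e (x(i:=True)))"
    unfolding IJ(1) by (rule sum_cube_insert[OF IJ(3,2)])
  also have "\<dots> = 0"
  proof (rule sum.neutral, rule ballI)
    fix x assume "x \<in> cube J"
    then have "\<not> x i" using IJ unfolding cube_def by auto
    moreover have "chi (e - {i}) (x(i:=True)) = chi (e - {i}) x" by (rule chi_upd) simp
    ultimately show "chi e x + chi e (x(i:=True)) = 0" unfolding ce by (simp add: sgnb_def)
  qed
  finally show ?thesis .
qed

lemma edges_on_alt: "edges_on n = {e. e \<subseteq> {1..n} \<and> card e = 2}"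
  unfolding edges_on_def by (auto simp: card_2_iff) blast+

lemma finite_edges: "finite (edges_on n)"
  unfolding edges_on_alt by (rule finite_subset[of _ "Pow {1..n}"]) auto

lemma card_edges: "card (edges_on n) = n choose 2"
  unfolding edges_on_alt using n_subsets[of "{1..n}" 2] by simp

lemma matchings_sub: "M \<in> matchings n m \<Longrightarrow> M \<subseteq> edges_on n \<and> card M = m \<and> finite M"
  unfolding matchings_def by auto

lemma finite_matchings: "finite (matchings n m)"
  by (rule finite_subset[of _ "Pow (edges_on n)"]) (auto simp: matchings_def finite_edges)

lemma matchings_nonempty:
  assumes "2 * m \<le> n"
  shows "matchings n m \<noteq> {}"
proof -
  define M where "M = (\<lambda>k. {2*k+1, 2*k+2}) ` {..<m}"
  have inj: "inj_on (\<lambda>k. {2*k+1, 2*k+2}) {..<m}"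
    unfolding inj_on_def by (auto simp: doubleton_eq_iff)
  have "(\<lambda>k. {2*k+1, 2*k+2}) k \<in> edges_on n" if "k < m" for k
    unfolding edges_on_def using that assms by (intro CollectI exI[of _ "2*k+1"] exI[of _ "2*k+2"]) auto
  then have "M \<subseteq> edges_on n" unfolding M_def by auto
  moreover have "pairwise disjnt M" unfolding M_def pairwise_def disjnt_def by auto presburger+
  moreover have "finite M" "card M = m" unfolding M_def using card_image[OF inj] by auto
  ultimately have "M \<in> matchings n m" unfolding matchings_def by blast
  then show ?thesis by blast
qed

definition sw :: "nat \<Rightarrow> nat \<Rightarrow> nat \<Rightarrow> nat" where
  "sw a b x = (if x = a then b else if x = b then a else x)"

lemma inj_sw: "inj (sw a b)"
  unfolding inj_def sw_def by auto

lemma sw_range: "a \<in> S \<Longrightarrow> b \<in> S \<Longrightarrow> x \<in> S \<Longrightarrow> sw a b x \<in> S"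
  unfolding sw_def by auto

lemma match_image:
  assumes M: "M \<in> matchings n m" and inj: "inj \<pi>" and rng: "\<And>x. x \<in> {1..n} \<Longrightarrow> \<pi> x \<in> {1..n}"
  shows "(image \<pi>) ` M \<in> matchings n m"
proof -
  have Ms: "M \<subseteq> edges_on n" "pairwise disjnt M" "finite M" "card M = m"
    using M unfolding matchings_def by auto
  have "(image \<pi>) ` M \<subseteq> edges_on n"
  proof
    fix f assume "f \<in> (image \<pi>) ` M"
    then obtain e where e: "e \<in> M" "f = \<pi> ` e" by blast
    then obtain i j where ij: "i \<in> {1..n}" "j \<in> {1..n}" "i \<noteq> j" "e = {i, j}"
      using Ms(1) unfolding edges_on_def by blast
    have "\<pi> i \<noteq> \<pi> j" using inj ij(3) by (meson injD)
    then show "f \<in> edges_on n" unfolding edges_on_def using e ij rng by auto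
  qed
  moreover have "pairwise disjnt ((image \<pi>) ` M)"
    unfolding pairwise_def
  proof (intro ballI impI)
    fix X Y assume "X \<in> (image \<pi>) ` M" "Y \<in> (image \<pi>) ` M" "X \<noteq> Y"
    then obtain X0 Y0 where "X0 \<in> M" "Y0 \<in> M" "X = \<pi> ` X0" "Y = \<pi> ` Y0" "X0 \<noteq> Y0" by blast
    then have "disjnt X0 Y0" using Ms(2) unfolding pairwise_def by blast
    then show "disjnt X Y" using \<open>X = \<pi> ` X0\<close> \<open>Y = \<pi> ` Y0\<close> inj
      unfolding disjnt_def by (auto simp: image_Int[symmetric])
  qed
  moreover have "card ((image \<pi>) ` M) = m"
  proof -
    have "inj_on (image \<pi>) M" using inj by (meson inj_image_eq_iff inj_onI)
    then show ?thesis using card_image Ms(4) by metis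
  qed
  ultimately show ?thesis unfolding matchings_def using Ms(3) by blast
qed

lemma deg_le:
  assumes e: "e \<in> edges_on n" and e': "e' \<in> edges_on n"
  shows "card {M \<in> matchings n m. e \<in> M} \<le> card {M \<in> matchings n m. e' \<in> M}"
proof -
  obtain i j where ij: "i \<in> {1..n}" "j \<in> {1..n}" "i \<noteq> j" "e = {i, j}"
    using e unfolding edges_on_def by blast
  obtain i' j' where ij': "i' \<in> {1..n}" "j' \<in> {1..n}" "i' \<noteq> j'" "e' = {i', j'}"
    using e' unfolding edges_on_def by blast
  define \<pi> where "\<pi> = sw (sw i i' j) j' \<circ> sw i i'"
  have inj: "inj \<pi>" unfolding \<pi>_def using inj_sw by (simp add: inj_compose)
  have rng: "\<pi> x \<in> {1..n}" if "x \<in> {1..n}" for x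
  proof -
    have a: "sw i i' j \<in> {1..n}" by (rule sw_range) (use ij ij' in auto)
    have b: "sw i i' x \<in> {1..n}" by (rule sw_range) (use ij ij' that in auto)
    show ?thesis unfolding \<pi>_def using sw_range[OF a ij'(2) b] by simp
  qed
  have "sw i i' j \<noteq> i'" using ij unfolding sw_def by auto
  then have pi_i: "\<pi> i = i'" "\<pi> j = j'" unfolding \<pi>_def using ij' by (auto simp: sw_def)
  have pe: "\<pi> ` e = e'" using pi_i ij ij' by auto
  have "inj_on (image (image \<pi>)) {M \<in> matchings n m. e \<in> M}"
  proof -
    have "inj (image \<pi>)" using inj by (meson inj_image_eq_iff inj_onI)
    then have "inj (image (image \<pi>))" by (meson inj_image_eq_iff inj_onI)
    then show ?thesis by (meson inj_on_subset subset_UNIV)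
  qed
  moreover have "image (image \<pi>) ` {M \<in> matchings n m. e \<in> M} \<subseteq> {M \<in> matchings n m. e' \<in> M}"
    using match_image[OF _ inj rng] pe by auto
  moreover have "finite {M \<in> matchings n m. e' \<in> M}" using finite_matchings by simp
  ultimately show ?thesis by (rule card_inj_on_le)
qed

lemma deg_eq:
  assumes "e \<in> edges_on n" and "e' \<in> edges_on n"
  shows "card {M \<in> matchings n m. e \<in> M} = card {M \<in> matchings n m. e' \<in> M}"
  using deg_le[OF assms, where m=m] deg_le[OF assms(2,1), where m=m] by simp

lemma deg_sum:
  "(\<Sum>e\<in>edges_on n. real (card {M \<in> matchings n m. e \<in> M})) = real m * real (card (matchings n m))"
proof -
  have "(\<Sum>e\<in>edges_on n. real (card {M \<in> matchings n m. e \<in> M}))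
      = (\<Sum>e\<in>edges_on n. \<Sum>M\<in>matchings n m. if e \<in> M then 1 else 0)"
    using finite_matchings by (simp add: sum.If_cases Int_def)
  also have "\<dots> = (\<Sum>M\<in>matchings n m. \<Sum>e\<in>edges_on n. if e \<in> M then 1 else 0)" by (rule sum.swap)
  also have "\<dots> = (\<Sum>M\<in>matchings n m. real m)"
  proof (rule sum.cong)
    fix M assume M: "M \<in> matchings n m"
    have "(\<Sum>e\<in>edges_on n. if e \<in> M then 1 else 0 :: real) = real (card (edges_on n \<inter> M))"
      using finite_edges by (simp add: sum.If_cases)
    also have "edges_on n \<inter> M = M" using matchings_sub[OF M] by auto
    finally show "(\<Sum>e\<in>edges_on n. if e \<in> M then 1 else 0 :: real) = real m" using matchings_sub[OF M] by simp
  qed simp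
  finally show ?thesis by simp
qed

lemma deg_val:
  assumes "e \<in> edges_on n"
  shows "real (card {M \<in> matchings n m. e \<in> M}) * real (card (edges_on n)) = real m * real (card (matchings n m))"
proof -
  have "(\<Sum>e'\<in>edges_on n. real (card {M \<in> matchings n m. e' \<in> M})) = (\<Sum>e'\<in>edges_on n. real (card {M \<in> matchings n m. e \<in> M}))"
    using deg_eq[OF _ assms] by (intro sum.cong) auto
  then show ?thesis using deg_sum[of n m] by (simp add: mult.commute)
qed

lemma yao:
  fixes P :: "'r measure" and X :: "'i set" and Ev :: "'i \<Rightarrow> 'r set"
  assumes P: "prob_space P" and fin: "finite X"
    and ev: "\<And>i. i \<in> X \<Longrightarrow> Ev i \<in> sets P \<and> measure P (Ev i) \<le> \<epsilon>"
  shows "\<exists>r\<in>space P. (\<Sum>i\<in>X. indicator (Ev i) r) \<le> \<epsilon> * real (card X)"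
proof (rule ccontr)
  interpret prob_space P by (rule P)
  assume "\<not> ?thesis"
  then have gt: "\<And>r. r \<in> space P \<Longrightarrow> (\<Sum>i\<in>X. indicator (Ev i) r) > \<epsilon> * real (card X)" by force
  define K :: real where "K = of_int (\<lfloor>\<epsilon> * real (card X)\<rfloor> + 1)"
  have K: "K > \<epsilon> * real (card X)" unfolding K_def by linarith
  have ge: "(\<Sum>i\<in>X. indicator (Ev i) r) \<ge> K" if r: "r \<in> space P" for r
  proof -
    have eqc: "(\<Sum>i\<in>X. indicator (Ev i) r :: real) = real (card {i\<in>X. r \<in> Ev i})"
      using fin by (simp add: indicator_def sum.If_cases Int_def)
    moreover have "real (card {i\<in>X. r \<in> Ev i}) > \<epsilon> * real (card X)" using gt[OF r] calculation by simp
    ultimately have lt: "\<epsilon> * real (card X) < real (card {i\<in>X. r \<in> Ev i})" by simp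
    have "\<lfloor>\<epsilon> * real (card X)\<rfloor> < int (card {i\<in>X. r \<in> Ev i})"
      using lt by (simp add: floor_less_iff)
    then have "\<lfloor>\<epsilon> * real (card X)\<rfloor> + 1 \<le> int (card {i\<in>X. r \<in> Ev i})" by simp
    then have "K \<le> real (card {i\<in>X. r \<in> Ev i})" unfolding K_def
      by (metis of_int_le_iff of_int_of_nat_eq)
    then show ?thesis using eqc by simp
  qed
  have int: "integrable P (\<lambda>r. \<Sum>i\<in>X. indicator (Ev i) r :: real)"
    using ev by (intro Bochner_Integration.integrable_sum integrable_real_indicator) (auto simp: emeasure_eq_measure)
  have "K = integral\<^sup>L P (\<lambda>r. K)" using prob_space by simp
  also have "\<dots> \<le> integral\<^sup>L P (\<lambda>r. \<Sum>i\<in>X. indicator (Ev i) r :: real)"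
    by (rule integral_mono[OF integrable_const int ge])
  also have "\<dots> = (\<Sum>i\<in>X. integral\<^sup>L P (indicator (Ev i) :: 'r \<Rightarrow> real))"
    using ev by (intro Bochner_Integration.integral_sum integrable_real_indicator) (auto simp: emeasure_eq_measure)
  also have "\<dots> = (\<Sum>i\<in>X. measure P (Ev i))"
    using ev sets.sets_into_space by (intro sum.cong) (auto simp: Int_absorb2)
  also have "\<dots> \<le> (\<Sum>i\<in>X. \<epsilon>)" using ev by (intro sum_mono) auto
  finally show False using K by (simp add: mult.commute)
qed

lemma entropy_bound:
  fixes p :: "'a \<Rightarrow> nat"
  assumes fin: "finite S" and ne: "S \<noteq> {}" and N: "(\<Sum>a\<in>S. p a) = N"
  shows "(\<Sum>a\<in>S. real (p a) * ln (real N / real (p a))) \<le> real N * ln (real (card S))"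
proof -
  define K where "K = real (card S)"
  have K0: "K > 0" unfolding K_def using fin ne by (simp add: card_gt_0_iff)
  have pt: "real (p a) * ln (real N / real (p a)) \<le> real N / K - real (p a) + real (p a) * ln K" if a: "a \<in> S" for a
  proof (cases "p a = 0")
    case True then show ?thesis using K0 by simp
  next
    case False
    then have pa: "real (p a) > 0" by simp
    have "p a \<le> (\<Sum>a\<in>S. p a)" by (rule member_le_sum) (use a fin in auto)
    then have N0: "real N > 0" using N False by simp
    have "ln (real N / real (p a)) = ln (real N / (real (p a) * K)) + ln K"
      using pa K0 N0 by (simp add: ln_div ln_mult)
    moreover have "ln (real N / (real (p a) * K)) \<le> real N / (real (p a) * K) - 1"
      using pa K0 N0 by (intro ln_le_minus_one) simp
    ultimately have "real (p a) * ln (real N / real (p a)) \<le> real (p a) * (real N / (real (p a) * K) - 1 + ln K)"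
      using pa by (intro mult_left_mono) auto
    also have "\<dots> = real N / K - real (p a) + real (p a) * ln K" using pa K0 by (simp add: field_simps)
    finally show ?thesis .
  qed
  have "(\<Sum>a\<in>S. real (p a) * ln (real N / real (p a))) \<le> (\<Sum>a\<in>S. real N / K - real (p a) + real (p a) * ln K)"
    by (intro sum_mono pt) simp
  also have "\<dots> = K * (real N / K) - real N + real N * ln K"
    using N unfolding K_def by (simp add: sum.distrib sum_subtractf sum_distrib_right[symmetric] of_nat_sum[symmetric])
  also have "\<dots> = real N * ln K" using K0 by simp
  finally show ?thesis unfolding K_def .
qed

lemma bitstrings_cube: "bitstrings n = cube {1..n}"
  unfolding bitstrings_def cube_def by simp

lemma sum_over_matchings:
  fixes h :: "nat set \<Rightarrow> real"
  shows "(\<Sum>M\<in>matchings n m. \<Sum>e\<in>M. h e) = (\<Sum>e\<in>edges_on n. real (card {M \<in> matchings n m. e \<in> M}) * h e)"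
proof -
  have "(\<Sum>M\<in>matchings n m. \<Sum>e\<in>M. h e) = (\<Sum>M\<in>matchings n m. \<Sum>e\<in>edges_on n. if e \<in> M then h e else 0)"
  proof (rule sum.cong)
    fix M assume M: "M \<in> matchings n m"
    have "(\<Sum>e\<in>edges_on n. if e \<in> M then h e else 0) = (\<Sum>e\<in>edges_on n \<inter> M. h e)"
      using finite_edges by (simp add: sum.If_cases)
    also have "edges_on n \<inter> M = M" using matchings_sub[OF M] by auto
    finally show "(\<Sum>e\<in>M. h e) = (\<Sum>e\<in>edges_on n. if e \<in> M then h e else 0)" by simp
  qed simp
  also have "\<dots> = (\<Sum>e\<in>edges_on n. \<Sum>M\<in>matchings n m. if e \<in> M then h e else 0)" by (rule sum.swap)
  also have "\<dots> = (\<Sum>e\<in>edges_on n. real (card {M \<in> matchings n m. e \<in> M}) * h e)"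
  proof (rule sum.cong)
    fix e
    have "(\<Sum>M\<in>matchings n m. if e \<in> M then h e else 0) = (\<Sum>M\<in>matchings n m \<inter> {M. e \<in> M}. h e)"
      using finite_matchings by (simp add: sum.If_cases)
    also have "\<dots> = real (card {M \<in> matchings n m. e \<in> M}) * h e" by (simp add: Int_def)
    finally show "(\<Sum>M\<in>matchings n m. if e \<in> M then h e else 0) = real (card {M \<in> matchings n m. e \<in> M}) * h e" .
  qed simp
  finally show ?thesis .
qed

lemma matching_avg:
  fixes F :: "nat set \<Rightarrow> real" and ed :: "nat set set \<Rightarrow> nat set"
  assumes ed: "\<And>M. M \<in> matchings n m \<Longrightarrow> ed M \<in> M \<or> F (ed M) = 0"
    and Epos: "card (edges_on n) > 0"
  shows "(\<Sum>M\<in>matchings n m. \<bar>F (ed M)\<bar>)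
          \<le> real (card (matchings n m)) * sqrt (real m / real (card (edges_on n))) * sqrt (\<Sum>e\<in>edges_on n. (F e)^2)"
proof -
  define Ms where "Ms = matchings n m"
  define s where "s M = sqrt (\<Sum>e\<in>M. (F e)^2)" for M
  define W where "W = (\<Sum>e\<in>edges_on n. (F e)^2)"
  define Ec where "Ec = real (card (edges_on n))"
  have Ec0: "Ec > 0" using Epos unfolding Ec_def by simp
  have finMs: "finite Ms" unfolding Ms_def by (rule finite_matchings)
  have pt: "\<bar>F (ed M)\<bar> \<le> s M" if M: "M \<in> Ms" for M
  proof -
    have finM: "finite M" using matchings_sub M unfolding Ms_def by blast
    show ?thesis
    proof (cases "ed M \<in> M")
      case True
      have "(F (ed M))^2 \<le> (\<Sum>e\<in>M. (F e)^2)" by (rule member_le_sum) (use True finM in auto)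
      then show ?thesis unfolding s_def by (metis real_sqrt_abs real_sqrt_le_mono)
    next
      case False
      then have "F (ed M) = 0" using ed M unfolding Ms_def by blast
      then show ?thesis unfolding s_def by (simp add: sum_nonneg)
    qed
  qed
  have "(\<Sum>M\<in>Ms. \<bar>F (ed M)\<bar>) \<le> (\<Sum>M\<in>Ms. s M)" by (intro sum_mono pt)
  also have "\<dots> \<le> sqrt ((\<Sum>M\<in>Ms. (s M)^2) * real (card Ms))"
  proof (rule real_le_rsqrt)
    have "(\<Sum>M\<in>Ms. s M * 1)\<^sup>2 \<le> (\<Sum>M\<in>Ms. (s M)\<^sup>2) * (\<Sum>M\<in>Ms. 1\<^sup>2)" by (rule Cauchy_Schwarz_ineq_sum)
    then show "(\<Sum>M\<in>Ms. s M)\<^sup>2 \<le> (\<Sum>M\<in>Ms. (s M)\<^sup>2) * real (card Ms)" by simp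
  qed
  also have "(\<Sum>M\<in>Ms. (s M)^2) = (\<Sum>M\<in>Ms. \<Sum>e\<in>M. (F e)^2)"
    unfolding s_def by (intro sum.cong) (auto intro: sum_nonneg)
  also have "\<dots> = (\<Sum>e\<in>edges_on n. real (card {M \<in> Ms. e \<in> M}) * (F e)^2)"
    unfolding Ms_def by (rule sum_over_matchings)
  also have "\<dots> = (\<Sum>e\<in>edges_on n. (real m * real (card Ms) / Ec) * (F e)^2)"
  proof (rule sum.cong)
    fix e assume e: "e \<in> edges_on n"
    have "real (card {M \<in> Ms. e \<in> M}) = real m * real (card Ms) / Ec"
      using deg_val[OF e, of m] Ec0 unfolding Ms_def Ec_def by (simp add: field_simps)
    then show "real (card {M \<in> Ms. e \<in> M}) * (F e)^2 = (real m * real (card Ms) / Ec) * (F e)^2" by simp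
  qed simp
  also have "\<dots> = (real m * real (card Ms) / Ec) * W" unfolding W_def by (simp add: sum_distrib_left)
  also have "sqrt ((real m * real (card Ms) / Ec) * W * real (card Ms)) = sqrt ((real (card Ms))^2 * (real m / Ec) * W)"
    by (simp add: power2_eq_square algebra_simps)
  also have "\<dots> = real (card Ms) * sqrt (real m / Ec) * sqrt W"
    by (simp only: real_sqrt_mult real_sqrt_abs abs_of_nat)
  finally show ?thesis unfolding Ms_def Ec_def W_def .
qed

lemma choose2_real: "real (n choose 2) = real n * (real n - 1) / 2"
proof (induction n)
  case 0 then show ?case by simp
next
  case (Suc n)
  have "Suc n choose 2 = n + (n choose 2)" by (simp add: numeral_2_eq_2)
  then show ?case using Suc by (simp add: field_simps)
qed

lemma ln2_ge: "ln (2::real) \<ge> 1/2"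
proof -
  have "ln (1/2::real) \<le> 1/2 - 1" by (rule ln_le_minus_one) simp
  then show ?thesis by (simp add: ln_div)
qed

lemma e_ge2: "exp (1::real) \<ge> 2"
  using exp_ge_add_one_self[of "1::real"] by simp

theorem mainTheorem3:
  fixes n m c :: nat and \<alpha> \<epsilon> :: real
    and P :: "'r measure"
    and MS :: "'m set"
    and enc :: "'r \<Rightarrow> (nat \<Rightarrow> bool) \<Rightarrow> 'm"
    and dec :: "'r \<Rightarrow> 'm \<Rightarrow> nat set set \<Rightarrow> nat \<times> nat \<times> bool"
  assumes "even n"
    and "0 < \<alpha>" and "\<alpha> \<le> 1/4"
    and "m > 0" and "real m = \<alpha> * real n"
    and "0 \<le> \<epsilon>" and "\<epsilon> < 1/2"
    and "prob_space P"
    and "finite MS" and "card MS \<le> 2 ^ c"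
    and "\<forall>r \<in> space P. \<forall>x \<in> bitstrings n. enc r x \<in> MS"
    and "\<forall>r \<in> space P. \<forall>x \<in> bitstrings n. \<forall>M \<in> matchings n m.
           (case dec r (enc r x) M of (i, j, b) \<Rightarrow> {i, j} \<in> M)"
    and "\<forall>x \<in> bitstrings n. \<forall>M \<in> matchings n m.
           {r \<in> space P. case dec r (enc r x) M of (i, j, b) \<Rightarrow> b \<noteq> (x i \<noteq> x j)} \<in> sets P
         \<and> measure P {r \<in> space P. case dec r (enc r x) M of (i, j, b) \<Rightarrow> b \<noteq> (x i \<noteq> x j)} \<le> \<epsilon>"
  shows "real c \<ge> 1 / (exp 1 * ln 2) * (1/2 - \<epsilon>) * sqrt ((real n - 1) / (2 * \<alpha>))"
proof -
  define B where "B = bitstrings n"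
  define Ms where "Ms = matchings n m"
  define I where "I = {1..n}"
  define Ec where "Ec = real (card (edges_on n))"
  have n4: "4 * m \<le> n"
  proof -
    have "\<alpha> * real n \<le> (1/4) * real n" by (rule mult_right_mono[OF assms(3)]) simp
    then have "real m \<le> real n / 4" using assms(5) by simp
    then show ?thesis by linarith
  qed
  have n4': "n \<ge> 4" using n4 assms(4) by linarith
  have finI: "finite I" unfolding I_def by simp
  have BI: "B = cube I" unfolding B_def I_def by (rule bitstrings_cube)
  have finB: "finite B" unfolding BI by (rule finite_cube[OF finI])
  have cardB: "card B = 2 ^ n" unfolding BI using card_cube[OF finI] unfolding I_def by simp
  have x0B: "(\<lambda>_. False) \<in> B" unfolding BI cube_def by simp
  have finMs: "finite Ms" unfolding Ms_def by (rule finite_matchings)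
  have Msne: "Ms \<noteq> {}" unfolding Ms_def using n4 by (intro matchings_nonempty) simp
  have cardMs: "card Ms > 0" using finMs Msne by (simp add: card_gt_0_iff)
  have Ec_val: "Ec = real n * (real n - 1) / 2" unfolding Ec_def card_edges by (rule choose2_real)
  have Ec0: "Ec > 0" unfolding Ec_val using n4' by simp
  have EI: "edges_on n \<subseteq> Pow I" and E2: "\<forall>e\<in>edges_on n. card e = 2"
    unfolding edges_on_alt I_def by auto
  define err where "err r x M = (case dec r (enc r x) M of (i, j, b) \<Rightarrow> b \<noteq> (x i \<noteq> x j))" for r x M
  define Ev where "Ev p = {r \<in> space P. err r (fst p) (snd p)}" for p
  have "\<exists>r\<in>space P. (\<Sum>p\<in>B \<times> Ms. indicator (Ev p) r) \<le> \<epsilon> * real (card (B \<times> Ms))"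
  proof (rule yao[OF assms(8)])
    show "finite (B \<times> Ms)" using finB finMs by simp
    fix p assume p: "p \<in> B \<times> Ms"
    obtain x M where xM: "p = (x, M)" "x \<in> bitstrings n" "M \<in> matchings n m"
      using p unfolding B_def Ms_def by (cases p) auto
    have "Ev p = {r \<in> space P. case dec r (enc r x) M of (i, j, b) \<Rightarrow> b \<noteq> (x i \<noteq> x j)}"
      unfolding Ev_def err_def xM by simp
    then show "Ev p \<in> sets P \<and> measure P (Ev p) \<le> \<epsilon>"
      using assms(13) xM(2,3) by simp
  qed
  then obtain r where r: "r \<in> space P"
    and cnt0: "(\<Sum>p\<in>B \<times> Ms. indicator (Ev p) r) \<le> \<epsilon> * real (card (B \<times> Ms))" by blast
  define ind where "ind x M = (if err r x M then 1 else 0 :: real)" for x M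
  have cnt: "(\<Sum>x\<in>B. \<Sum>M\<in>Ms. ind x M) \<le> \<epsilon> * real (card B) * real (card Ms)"
  proof -
    have "(\<Sum>x\<in>B. \<Sum>M\<in>Ms. ind x M) = (\<Sum>p\<in>B \<times> Ms. indicator (Ev p) r)"
      unfolding sum.cartesian_product using r by (intro sum.cong) (auto simp: ind_def Ev_def indicator_def)
    then show ?thesis using cnt0 by (simp add: card_cartesian_product mult.assoc)
  qed
  define A where "A a = {x \<in> B. enc r x = a}" for a
  define ed where "ed a M = (case dec r a M of (i, j, b) \<Rightarrow> {i, j})" for a M
  define W where "W a = (\<Sum>e\<in>edges_on n. (Fco (A a) e)^2)" for a
  have encMS: "enc r ` B \<subseteq> MS" using assms(11) r unfolding B_def by auto
  have AI: "A a \<subseteq> cube I" for a unfolding A_def BI by auto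
  have finA: "finite (A a)" for a unfolding A_def using finB by simp
  have errA: "(real (card (A a)) - \<bar>Fco (A a) (ed a M)\<bar>) / 2 \<le> (\<Sum>x\<in>A a. ind x M)
          \<and> (ed a M \<in> M \<or> Fco (A a) (ed a M) = 0)" if M: "M \<in> Ms" for a M
  proof (cases "A a = {}")
    case True
    then show ?thesis by (simp add: Fco_def)
  next
    case False
    then obtain x0 where x0: "x0 \<in> A a" by blast
    obtain i j b where d: "dec r a M = (i, j, b)" by (cases "dec r a M") auto
    have x0a: "enc r x0 = a" "x0 \<in> B" using x0 unfolding A_def by auto
    have x0b: "x0 \<in> bitstrings n" using x0a(2) unfolding B_def .
    have Mm: "M \<in> matchings n m" using M unfolding Ms_def .
    have "case dec r (enc r x0) M of (i, j, b) \<Rightarrow> {i, j} \<in> M"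
      using bspec[OF bspec[OF bspec[OF assms(12) r] x0b] Mm] .
    then have ijM: "{i, j} \<in> M" using x0a(1) d by simp
    have "{i, j} \<in> edges_on n" using ijM matchings_sub[OF Mm] by blast
    then have "card {i, j} = 2" using E2 by blast
    then have ij: "i \<noteq> j" by (cases "i = j") auto
    have edv: "ed a M = {i, j}" unfolding ed_def d by simp
    have pt: "ind x M = (1 - sgnb b * chi {i, j} x) / 2" if x: "x \<in> A a" for x
    proof -
      have "enc r x = a" using x unfolding A_def by auto
      then show ?thesis unfolding ind_def err_def chi_def using d ij by (auto simp: sgnb_def)
    qed
    have "(\<Sum>x\<in>A a. ind x M) = (\<Sum>x\<in>A a. (1 - sgnb b * chi {i, j} x) / 2)" using pt by (intro sum.cong) auto
    also have "\<dots> = (real (card (A a)) - sgnb b * Fco (A a) {i, j}) / 2"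
      unfolding Fco_def by (simp add: sum_divide_distrib[symmetric] sum_subtractf sum_distrib_left)
    finally have "(\<Sum>x\<in>A a. ind x M) = (real (card (A a)) - sgnb b * Fco (A a) {i, j}) / 2" .
    moreover have "sgnb b * Fco (A a) {i, j} \<le> \<bar>Fco (A a) {i, j}\<bar>" by (cases b) (auto simp: sgnb_def)
    ultimately show ?thesis using ijM unfolding edv by simp
  qed
  have per_a: "(\<Sum>M\<in>Ms. \<bar>Fco (A a) (ed a M)\<bar>) \<le> real (card Ms) * sqrt (real m / Ec) * sqrt (W a)" for a
    unfolding Ms_def Ec_def W_def
    by (rule matching_avg) (use errA Ec0 in \<open>auto simp: Ms_def Ec_def\<close>)
  define s where "s = sqrt (real m / Ec)"
  have s0: "s > 0" unfolding s_def using Ec0 assms(4) by simp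
  have grp: "(\<Sum>a\<in>MS. \<Sum>x\<in>A a. h x) = (\<Sum>x\<in>B. h x)" for h :: "(nat \<Rightarrow> bool) \<Rightarrow> real"
    unfolding A_def by (rule sum.group[OF finB assms(9) encMS])
  have cardA: "(\<Sum>a\<in>MS. real (card (A a))) = real (card B)"
    using grp[of "\<lambda>_. 1"] by simp
  define S where "S = (\<Sum>a\<in>MS. sqrt (W a))"
  have "real (card Ms) * real (card B) / 2 - real (card Ms) * s * S / 2
        \<le> (\<Sum>M\<in>Ms. \<Sum>a\<in>MS. (real (card (A a)) - \<bar>Fco (A a) (ed a M)\<bar>) / 2)"
  proof -
    have "(\<Sum>M\<in>Ms. \<Sum>a\<in>MS. (real (card (A a)) - \<bar>Fco (A a) (ed a M)\<bar>) / 2)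
        = real (card Ms) * real (card B) / 2 - (\<Sum>a\<in>MS. \<Sum>M\<in>Ms. \<bar>Fco (A a) (ed a M)\<bar>) / 2"
    proof -
      have "(\<Sum>M\<in>Ms. \<Sum>a\<in>MS. (real (card (A a)) - \<bar>Fco (A a) (ed a M)\<bar>) / 2)
          = (\<Sum>M\<in>Ms. real (card B) / 2 - (\<Sum>a\<in>MS. \<bar>Fco (A a) (ed a M)\<bar>) / 2)"
        by (intro sum.cong refl) (simp add: sum_subtractf sum_divide_distrib[symmetric] cardA)
      also have "\<dots> = real (card Ms) * real (card B) / 2 - (\<Sum>M\<in>Ms. \<Sum>a\<in>MS. \<bar>Fco (A a) (ed a M)\<bar>) / 2"
        by (simp add: sum_subtractf sum_divide_distrib[symmetric])
      also have "(\<Sum>M\<in>Ms. \<Sum>a\<in>MS. \<bar>Fco (A a) (ed a M)\<bar>) = (\<Sum>a\<in>MS. \<Sum>M\<in>Ms. \<bar>Fco (A a) (ed a M)\<bar>)"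
        by (rule sum.swap)
      finally show ?thesis .
    qed
    moreover have "(\<Sum>a\<in>MS. \<Sum>M\<in>Ms. \<bar>Fco (A a) (ed a M)\<bar>) \<le> (\<Sum>a\<in>MS. real (card Ms) * s * sqrt (W a))"
      by (intro sum_mono) (use per_a in \<open>simp add: s_def\<close>)
    moreover have "(\<Sum>a\<in>MS. real (card Ms) * s * sqrt (W a)) = real (card Ms) * s * S"
      unfolding S_def by (simp add: sum_distrib_left)
    ultimately show ?thesis by linarith
  qed
  also have "\<dots> \<le> (\<Sum>M\<in>Ms. \<Sum>a\<in>MS. \<Sum>x\<in>A a. ind x M)"
    using errA by (intro sum_mono) auto
  also have "\<dots> = (\<Sum>x\<in>B. \<Sum>M\<in>Ms. ind x M)"
    unfolding grp by (rule sum.swap)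
  also have "\<dots> \<le> \<epsilon> * real (card B) * real (card Ms)" by (rule cnt)
  finally have "real (card Ms) * ((1/2 - \<epsilon>) * real (card B)) \<le> real (card Ms) * (s * S / 2)"
    by (simp add: algebra_simps)
  then have key: "(1/2 - \<epsilon>) * real (card B) \<le> s * S / 2"
    using cardMs by (simp add: mult_le_cancel_left_pos)
  have cardI: "card I = n" unfolding I_def by simp
  have x0enc: "enc r (\<lambda>_. False) \<in> MS" using encMS x0B by auto
  have MSne: "MS \<noteq> {}" using x0enc by blast
  have cardMS1: "card MS \<ge> 1" using MSne assms(9) by (simp add: Suc_le_eq card_gt_0_iff)
  have Wnn: "W a \<ge> 0" for a unfolding W_def by (intro sum_nonneg) simp
  have fin_goal: "real c \<ge> 1 / (exp 1 * ln 2) * (1/2 - \<epsilon>) * sqrt ((real n - 1) / (2 * \<alpha>))"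
    if h: "1/2 - \<epsilon> \<le> exp 1 * ln 2 * real c * s"
  proof -
    have eq1: "(real n - 1) / (2 * \<alpha>) = 1 / (real m / Ec)"
      unfolding Ec_val assms(5) using n4' assms(2) by (simp add: field_simps)
    have sq: "sqrt ((real n - 1) / (2 * \<alpha>)) = 1 / s"
      unfolding eq1 s_def by (simp add: real_sqrt_divide)
    have pos: "exp 1 * ln 2 * s > 0" using s0 by simp
    have "1 / (exp 1 * ln 2) * (1/2 - \<epsilon>) * sqrt ((real n - 1) / (2 * \<alpha>)) = (1/2 - \<epsilon>) / (exp 1 * ln 2 * s)"
      unfolding sq by simp
    also have "\<dots> \<le> real c" using h pos by (simp add: pos_divide_le_eq mult.commute mult.left_commute)
    finally show ?thesis .
  qed
  have cardBr: "real (card B) = 2 ^ n" unfolding cardB by simp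
  consider "c = 0" | "c = 1" | "c \<ge> 2" by linarith
  then show ?thesis
  proof cases
    case 1
    then have "card MS \<le> 1" using assms(10) by simp
    then have one: "\<forall>a\<in>MS. a = enc r (\<lambda>_. False)" using x0enc assms(9)
      by (metis card_le_Suc0_iff_eq One_nat_def)
    have "W a = 0" if a: "a \<in> MS" for a
    proof -
      have "enc r x = a" if x: "x \<in> B" for x
      proof -
        have "enc r x \<in> MS" using encMS x by auto
        then have "enc r x = enc r (\<lambda>_. False)" using one by blast
        moreover have "a = enc r (\<lambda>_. False)" using one a by blast
        ultimately show ?thesis by simp
      qed
      then have "A a = B" unfolding A_def by auto
      then have "Fco (A a) e = 0" if "e \<in> edges_on n" for e
        unfolding Fco_def BI using chi_sum_zero[OF finI] that EI E2
        by (metis PowD card.empty subsetD zero_neq_numeral)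
      then show ?thesis unfolding W_def by simp
    qed
    then have "S = 0" unfolding S_def by simp
    then have "(1/2 - \<epsilon>) * 2 ^ n \<le> 0" using key cardBr by simp
    moreover have "(1/2 - \<epsilon>) * 2 ^ n > (0::real)" using assms(7) by simp
    ultimately have False by linarith
    then show ?thesis ..
  next
    case 2
    have "sqrt (W a) \<le> (real (card (A a)) + 2 ^ n) / 2" for a
      using level2_simple[OF finI AI EI E2, of a] unfolding W_def cardI by simp
    then have "S \<le> (\<Sum>a\<in>MS. (real (card (A a)) + 2 ^ n) / 2)" unfolding S_def by (intro sum_mono) auto
    also have "\<dots> = (real (card B) + real (card MS) * 2 ^ n) / 2"
      by (simp add: sum_divide_distrib[symmetric] sum.distrib cardA)
    also have "\<dots> \<le> (2 ^ n + 2 * 2 ^ n) / 2" using assms(10) 2 cardBr by simp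
    finally have "S \<le> 3/2 * 2 ^ n" by simp
    then have "s * S \<le> s * (3/2 * 2 ^ n)" using s0 by (intro mult_left_mono) auto
    then have "(1/2 - \<epsilon>) * 2 ^ n \<le> (3/4 * s) * 2 ^ n" using key cardBr by (simp add: algebra_simps)
    then have "1/2 - \<epsilon> \<le> 3/4 * s" by simp
    also have "\<dots> \<le> exp 1 * ln 2 * real c * s"
    proof -
      have "exp 1 * ln 2 \<ge> (2::real) * (1/2)" using e_ge2 ln2_ge by (intro mult_mono) auto
      then show ?thesis using s0 2 by (simp add: mult_right_mono)
    qed
    finally show ?thesis by (rule fin_goal)
  next
    case 3
    have pt: "sqrt (W a) \<le> exp 1 * real (card (A a)) * (ln (2 ^ n / real (card (A a))) + 1)" for a
    proof (cases "A a = {}")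
      case True
      then show ?thesis unfolding W_def Fco_def by simp
    next
      case False
      then show ?thesis using level2_entropy[OF finI AI EI E2 False] unfolding W_def cardI by simp
    qed
    have cardAn: "(\<Sum>a\<in>MS. card (A a)) = card B"
      using sum.group[OF finB assms(9) encMS, of "\<lambda>_. 1::nat"] unfolding A_def by simp
    have ent: "(\<Sum>a\<in>MS. real (card (A a)) * ln (real (card B) / real (card (A a)))) \<le> real (card B) * ln (real (card MS))"
      by (rule entropy_bound[OF assms(9) MSne cardAn])
    have lnMS: "ln (real (card MS)) \<le> real c * ln 2"
    proof -
      have "real (card MS) \<le> 2 ^ c" using assms(10) by (metis of_nat_le_iff of_nat_numeral of_nat_power)
      then have "ln (real (card MS)) \<le> ln (2 ^ c)" using cardMS1 by (intro ln_mono) auto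
      then show ?thesis by (simp add: ln_realpow)
    qed
    have "S \<le> (\<Sum>a\<in>MS. exp 1 * real (card (A a)) * (ln (2 ^ n / real (card (A a))) + 1))"
      unfolding S_def by (intro sum_mono pt)
    also have "\<dots> = exp 1 * ((\<Sum>a\<in>MS. real (card (A a)) * ln (real (card B) / real (card (A a)))) + real (card B))"
    proof -
      have cA2: "(\<Sum>a\<in>MS. exp 1 * real (card (A a))) = exp 1 * real (card B)"
        by (simp add: sum_distrib_left[symmetric] cardA)
      show ?thesis
        unfolding cardBr[symmetric] by (simp add: sum_distrib_left sum.distrib distrib_left distrib_right cardA mult.assoc cA2)
    qed
    also have "\<dots> \<le> exp 1 * (real (card B) * (real c * ln 2) + real (card B))"
      using ent lnMS by (intro mult_left_mono add_right_mono order_trans[OF ent] mult_left_mono) auto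
    finally have "S \<le> exp 1 * (real c * ln 2 + 1) * 2 ^ n" unfolding cardBr by (simp add: algebra_simps)
    then have "s * S \<le> s * (exp 1 * (real c * ln 2 + 1) * 2 ^ n)" using s0 by (intro mult_left_mono) auto
    then have "(1/2 - \<epsilon>) * 2 ^ n \<le> (s * exp 1 * (real c * ln 2 + 1) / 2) * 2 ^ n" using key cardBr
      by (simp add: algebra_simps)
    then have "1/2 - \<epsilon> \<le> s * exp 1 * (real c * ln 2 + 1) / 2" by simp
    also have "\<dots> \<le> exp 1 * ln 2 * real c * s"
    proof -
      have "real c * ln 2 \<ge> 2 * (1/2)" using 3 ln2_ge by (intro mult_mono) auto
      then have "(real c * ln 2 + 1) / 2 \<le> real c * ln 2" by simp
      then have "s * exp 1 * ((real c * ln 2 + 1) / 2) \<le> s * exp 1 * (real c * ln 2)"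
        using s0 by (intro mult_left_mono) auto
      then show ?thesis by (simp add: algebra_simps)
    qed
    finally show ?thesis by (rule fin_goal)
  qed
qed

end
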